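(* Let $G$ be a finite group and $X$ a finite $G$-poset. Then the orbit complex $\mathcal{K}(X)/G$ is equal to the simplicial complex $\mathcal{K}(X/G)$.
   Context: A finite $G$-poset is a finite poset with a (right) action of $G$ by order-preserving maps. $\mathcal{K}(Y)$ denotes the simplicial complex of non-empty chains of a poset $Y$. The orbit poset $X/G$ is the set of orbits $\overline{x}$ with $\overline{x}\le\overline{y}$ iff there exist $x_1\in\overline{x}$, $y_1\in\overline{y}$ with $x_1\le y_1$. For a $G$-complex $K$, the orbit complex $K/G$ has as vertices the orbits of vertices of $K$, and a set $\{\overline{v_0},\dots,\overline{v_n}\}$ of such orbits is a simplex iff there are representatives $w_i\in\overline{v_i}$ such that $\{w_0,\dots,w_n\}$ is a simplex of $K$. *)

theory Defs
  imports "HOL-Algebra.Group"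
begin

definition poset_on :: "'a set \<Rightarrow> ('a \<Rightarrow> 'a \<Rightarrow> bool) \<Rightarrow> bool" where
  "poset_on X leq \<longleftrightarrow>
     (\<forall>x\<in>X. leq x x) \<and>
     (\<forall>x\<in>X. \<forall>y\<in>X. leq x y \<and> leq y x \<longrightarrow> x = y) \<and>
     (\<forall>x\<in>X. \<forall>y\<in>X. \<forall>z\<in>X. leq x y \<and> leq y z \<longrightarrow> leq x z)"

definition right_action :: "('g, 'b) monoid_scheme \<Rightarrow> 'a set \<Rightarrow> ('a \<Rightarrow> 'g \<Rightarrow> 'a) \<Rightarrow> bool" where
  "right_action G X act \<longleftrightarrow>
     (\<forall>x\<in>X. \<forall>g\<in>carrier G. act x g \<in> X) \<and>
     (\<forall>x\<in>X. act x \<one>\<^bsub>G\<^esub> = x) \<and>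
     (\<forall>x\<in>X. \<forall>g\<in>carrier G. \<forall>h\<in>carrier G. act x (g \<otimes>\<^bsub>G\<^esub> h) = act (act x g) h)"

definition G_poset :: "('g, 'b) monoid_scheme \<Rightarrow> 'a set \<Rightarrow> ('a \<Rightarrow> 'a \<Rightarrow> bool) \<Rightarrow> ('a \<Rightarrow> 'g \<Rightarrow> 'a) \<Rightarrow> bool" where
  "G_poset G X leq act \<longleftrightarrow>
     group G \<and> poset_on X leq \<and> right_action G X act \<and>
     (\<forall>x\<in>X. \<forall>y\<in>X. \<forall>g\<in>carrier G. leq x y \<longrightarrow> leq (act x g) (act y g))"

text \<open>The simplicial complex K(Y) of non-empty chains of a poset (Y, leq),
  represented as its set of simplices.\<close>
definition chain_complex :: "'a set \<Rightarrow> ('a \<Rightarrow> 'a \<Rightarrow> bool) \<Rightarrow> 'a set set" where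
  "chain_complex Y leq = {\<sigma>. \<sigma> \<subseteq> Y \<and> \<sigma> \<noteq> {} \<and> (\<forall>x\<in>\<sigma>. \<forall>y\<in>\<sigma>. leq x y \<or> leq y x)}"

definition orbit_of :: "('g, 'b) monoid_scheme \<Rightarrow> ('a \<Rightarrow> 'g \<Rightarrow> 'a) \<Rightarrow> 'a \<Rightarrow> 'a set" where
  "orbit_of G act x = {act x g | g. g \<in> carrier G}"

definition orbit_le :: "('a \<Rightarrow> 'a \<Rightarrow> bool) \<Rightarrow> 'a set \<Rightarrow> 'a set \<Rightarrow> bool" where
  "orbit_le leq V1 V2 \<longleftrightarrow> (\<exists>x1\<in>V1. \<exists>y1\<in>V2. leq x1 y1)"

definition orbit_complex :: "('g, 'b) monoid_scheme \<Rightarrow> ('a \<Rightarrow> 'g \<Rightarrow> 'a) \<Rightarrow> 'a set set \<Rightarrow> 'a set set set" where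
  "orbit_complex G act K =
     {S. (\<forall>V\<in>S. V \<in> orbit_of G act ` (\<Union>K)) \<and>
         (\<exists>w. (\<forall>V\<in>S. w V \<in> V) \<and> w ` S \<in> K)}"

end

theory Submission
  imports Defs
begin

lemma top_exists:
  assumes "finite F" "F \<noteq> {}"
    and tot: "\<forall>x\<in>F. \<forall>y\<in>F. R x y \<or> R y x"
    and tr: "\<forall>x\<in>F. \<forall>y\<in>F. \<forall>z\<in>F. R x y \<and> R y z \<longrightarrow> R x z"
  shows "\<exists>t\<in>F. \<forall>x\<in>F. R x t"
  using assms(1,2,3,4)
proof (induction F rule: finite_ne_induct)
  case (singleton x)
  then have "R x x" by blast
  then show ?case by simp
next
  case (insert x F)
  have tot': "\<forall>a\<in>F. \<forall>b\<in>F. R a b \<or> R b a" using insert.prems(1) by blast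
  have tr': "\<forall>a\<in>F. \<forall>b\<in>F. \<forall>c\<in>F. R a b \<and> R b c \<longrightarrow> R a c" using insert.prems(2) by blast
  obtain t where t: "t \<in> F" "\<forall>y\<in>F. R y t" using insert.IH[OF tot' tr'] by blast
  have xx: "R x x" using insert.prems(1) by blast
  have tI: "t \<in> insert x F" using t(1) by simp
  have xI: "x \<in> insert x F" by simp
  show ?case
  proof (cases "R t x")
    case True
    have "\<forall>y\<in>insert x F. R y x"
    proof
      fix y assume y: "y \<in> insert x F"
      show "R y x"
      proof (cases "y = x")
        case True then show ?thesis using xx by simp
      next
        case False
        then have yF: "y \<in> F" using y by simp
        then have "R y t" using t(2) by simp
        then show ?thesis using insert.prems(2) y tI xI \<open>R t x\<close> by blast
      qed
    qed
    then show ?thesis using xI by blast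
  next
    case False
    then have "R x t" using insert.prems(1) tI xI by blast
    then have "\<forall>y\<in>insert x F. R y t" using t(2) by simp
    then show ?thesis using tI by blast
  qed
qed

context
  fixes G :: "('g, 'b) monoid_scheme" and X :: "'a set"
    and leq :: "'a \<Rightarrow> 'a \<Rightarrow> bool" and act :: "'a \<Rightarrow> 'g \<Rightarrow> 'a"
  assumes GP: "G_poset G X leq act"
begin

lemma grp: "group G" using GP unfolding G_poset_def by auto

lemma act_in: "x \<in> X \<Longrightarrow> g \<in> carrier G \<Longrightarrow> act x g \<in> X"
  using GP unfolding G_poset_def right_action_def by auto

lemma act_one: "x \<in> X \<Longrightarrow> act x \<one>\<^bsub>G\<^esub> = x"
  using GP unfolding G_poset_def right_action_def by auto

lemma act_mult: "x \<in> X \<Longrightarrow> g \<in> carrier G \<Longrightarrow> h \<in> carrier G \<Longrightarrow>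
   act x (g \<otimes>\<^bsub>G\<^esub> h) = act (act x g) h"
  using GP unfolding G_poset_def right_action_def by auto

lemma act_mono: "x \<in> X \<Longrightarrow> y \<in> X \<Longrightarrow> g \<in> carrier G \<Longrightarrow> leq x y \<Longrightarrow> leq (act x g) (act y g)"
  using GP unfolding G_poset_def by auto

lemma refl': "x \<in> X \<Longrightarrow> leq x x"
  using GP unfolding G_poset_def poset_on_def by auto

lemma trans': "x \<in> X \<Longrightarrow> y \<in> X \<Longrightarrow> z \<in> X \<Longrightarrow> leq x y \<Longrightarrow> leq y z \<Longrightarrow> leq x z"
  using GP unfolding G_poset_def poset_on_def by blast

lemma orbit_sub: "x \<in> X \<Longrightarrow> orbit_of G act x \<subseteq> X"
  unfolding orbit_of_def using act_in by auto

lemma orbit_self: "x \<in> X \<Longrightarrow> x \<in> orbit_of G act x"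
proof -
  assume x: "x \<in> X"
  interpret group G by (rule grp)
  have "x = act x \<one>\<^bsub>G\<^esub> \<and> \<one>\<^bsub>G\<^esub> \<in> carrier G" using act_one[OF x] by simp
  then show ?thesis unfolding orbit_of_def by blast
qed

lemma same_orbit:
  assumes "x \<in> X" "a \<in> orbit_of G act x" "b \<in> orbit_of G act x"
  shows "\<exists>g\<in>carrier G. b = act a g"
proof -
  obtain g1 where g1: "g1 \<in> carrier G" "a = act x g1" using assms(2) unfolding orbit_of_def by auto
  obtain g2 where g2: "g2 \<in> carrier G" "b = act x g2" using assms(3) unfolding orbit_of_def by auto
  have ig: "inv\<^bsub>G\<^esub> g1 \<otimes>\<^bsub>G\<^esub> g2 \<in> carrier G" using grp g1 g2 by (meson group.inv_closed group.is_monoid monoid.m_closed)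
  have "act a (inv\<^bsub>G\<^esub> g1 \<otimes>\<^bsub>G\<^esub> g2) = act x (g1 \<otimes>\<^bsub>G\<^esub> (inv\<^bsub>G\<^esub> g1 \<otimes>\<^bsub>G\<^esub> g2))"
    using act_mult[OF assms(1) g1(1) ig] g1 by simp
  also have "g1 \<otimes>\<^bsub>G\<^esub> (inv\<^bsub>G\<^esub> g1 \<otimes>\<^bsub>G\<^esub> g2) = g2"
  proof -
    interpret group G by (rule grp)
    show ?thesis using g1 g2 by (simp add: m_assoc[symmetric])
  qed
  finally have "act a (inv\<^bsub>G\<^esub> g1 \<otimes>\<^bsub>G\<^esub> g2) = b" using g2 by simp
  then show ?thesis using ig by (intro bexI[of _ "inv\<^bsub>G\<^esub> g1 \<otimes>\<^bsub>G\<^esub> g2"]) auto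
qed

lemma orbit_in_orbit: "x \<in> X \<Longrightarrow> g \<in> carrier G \<Longrightarrow> act x g \<in> orbit_of G act x"
  unfolding orbit_of_def by auto

lemma orbit_le_trans:
  assumes "x \<in> X" "y \<in> X" "z \<in> X"
    and "orbit_le leq (orbit_of G act x) (orbit_of G act y)"
    and "orbit_le leq (orbit_of G act y) (orbit_of G act z)"
  shows "orbit_le leq (orbit_of G act x) (orbit_of G act z)"
proof -
  obtain a b where ab: "a \<in> orbit_of G act x" "b \<in> orbit_of G act y" "leq a b"
    using assms(4) unfolding orbit_le_def by auto
  obtain c d where cd: "c \<in> orbit_of G act y" "d \<in> orbit_of G act z" "leq c d"
    using assms(5) unfolding orbit_le_def by auto
  obtain g where g: "g \<in> carrier G" "c = act b g" using same_orbit[OF assms(2) ab(2) cd(1)] by auto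
  have aX: "a \<in> X" using ab orbit_sub assms by auto
  have bX: "b \<in> X" using ab orbit_sub assms by auto
  have dX: "d \<in> X" using cd orbit_sub assms by auto
  have "leq (act a g) c" using act_mono[OF aX bX g(1) ab(3)] g by simp
  then have "leq (act a g) d" using trans'[OF act_in[OF aX g(1)] act_in[OF bX g(1)] dX] cd g by simp
  moreover obtain h where h: "h \<in> carrier G" "act a g = act x h"
  proof -
    obtain g1 where g1: "g1 \<in> carrier G" "a = act x g1" using ab(1) unfolding orbit_of_def by auto
    show ?thesis using that[of "g1 \<otimes>\<^bsub>G\<^esub> g"] act_mult[OF assms(1) g1(1) g(1)] g1 g grp
      by (simp add: group.is_monoid monoid.m_closed)
  qed
  ultimately have l: "leq (act x h) d" by simp
  have "act x h \<in> orbit_of G act x" using orbit_in_orbit[OF assms(1) h(1)] .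
  then show ?thesis unfolding orbit_le_def using cd(2) l by (intro bexI)
qed

lemma union_chain: "\<Union>(chain_complex X leq) = X"
proof
  show "\<Union>(chain_complex X leq) \<subseteq> X" unfolding chain_complex_def by auto
  show "X \<subseteq> \<Union>(chain_complex X leq)"
  proof
    fix x assume x: "x \<in> X"
    have "{x} \<in> chain_complex X leq" unfolding chain_complex_def using x refl' by simp
    then show "x \<in> \<Union>(chain_complex X leq)" by blast
  qed
qed

lemma reps:
  assumes "finite S" "S \<noteq> {}" "S \<subseteq> orbit_of G act ` X"
    and "\<forall>U\<in>S. \<forall>V\<in>S. orbit_le leq U V \<or> orbit_le leq V U"
  shows "\<exists>w. (\<forall>V\<in>S. w V \<in> V) \<and> w ` S \<in> chain_complex X leq"
  using assms
proof (induction "card S" arbitrary: S rule: less_induct)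
  case less
  have trS: "\<forall>U\<in>S. \<forall>V\<in>S. \<forall>W\<in>S. orbit_le leq U V \<and> orbit_le leq V W \<longrightarrow> orbit_le leq U W"
  proof (intro ballI impI)
    fix U V W assume UVW: "U \<in> S" "V \<in> S" "W \<in> S"
      and h: "orbit_le leq U V \<and> orbit_le leq V W"
    obtain x where x: "x \<in> X" "U = orbit_of G act x" using UVW(1) less.prems(3) by blast
    obtain y where y: "y \<in> X" "V = orbit_of G act y" using UVW(2) less.prems(3) by blast
    obtain z where z: "z \<in> X" "W = orbit_of G act z" using UVW(3) less.prems(3) by blast
    show "orbit_le leq U W" using orbit_le_trans[OF x(1) y(1) z(1)] h x(2) y(2) z(2) by simp
  qed
  obtain M where M: "M \<in> S" "\<forall>U\<in>S. orbit_le leq U M"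
    using top_exists[OF less.prems(1,2) less.prems(4) trS] by auto
  obtain xM where xM: "xM \<in> X" "M = orbit_of G act xM" using M less.prems(3) by auto
  show ?case
  proof (cases "S = {M}")
    case True
    show ?thesis
      apply (rule exI[of _ "\<lambda>_. xM"])
      using True xM orbit_self refl' unfolding chain_complex_def by auto
  next
    case False
    define S' where "S' = S - {M}"
    have c4: "card S' < card S" unfolding S'_def using M(1) less.prems(1) by (metis card_Diff1_less)
    have S'': "S' \<noteq> {}" using False M(1) less.prems(2) unfolding S'_def by blast
    have S': "finite S'" "S' \<noteq> {}" "S' \<subseteq> orbit_of G act ` X" "card S' < card S"
      "\<forall>U\<in>S'. \<forall>V\<in>S'. orbit_le leq U V \<or> orbit_le leq V U"
      using less.prems c4 S'' unfolding S'_def by auto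
    obtain w where w: "\<forall>V\<in>S'. w V \<in> V" "w ` S' \<in> chain_complex X leq"
      using less.hyps[OF S'(4) S'(1,2,3,5)] by blast
    have C: "finite (w ` S')" "w ` S' \<noteq> {}" "w ` S' \<subseteq> X"
      "\<forall>x\<in>w ` S'. \<forall>y\<in>w ` S'. leq x y \<or> leq y x"
      using w(2) S'(1) unfolding chain_complex_def by auto
    have trC: "\<forall>x\<in>w ` S'. \<forall>y\<in>w ` S'. \<forall>z\<in>w ` S'. leq x y \<and> leq y z \<longrightarrow> leq x z"
    proof (intro ballI impI)
      fix x y z assume "x \<in> w ` S'" "y \<in> w ` S'" "z \<in> w ` S'" "leq x y \<and> leq y z"
      then show "leq x z" using C(3) trans'[of x y z] by (meson subsetD)
    qed
    obtain c where c: "c \<in> w ` S'" "\<forall>x\<in>w ` S'. leq x c"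
      using top_exists[OF C(1,2,4) trC] by auto
    obtain U where U: "U \<in> S'" "c = w U" using c(1) by auto
    obtain xU where xU: "xU \<in> X" "U = orbit_of G act xU" using U S'(3) by auto
    have "orbit_le leq U M" using M U unfolding S'_def by auto
    then obtain u m where um: "u \<in> U" "m \<in> M" "leq u m" unfolding orbit_le_def by auto
    have cU: "c \<in> U" using w(1) U by auto
    obtain g where g: "g \<in> carrier G" "c = act u g" using same_orbit[OF xU(1)] um(1) cU xU(2) by auto
    have uX: "u \<in> X" using um xU orbit_sub by auto
    have mX: "m \<in> X" using um xM orbit_sub by auto
    have cm: "leq c (act m g)" using act_mono[OF uX mX g(1) um(3)] g by simp
    have mgM: "act m g \<in> M"
    proof -
      obtain g1 where g1: "g1 \<in> carrier G" "m = act xM g1" using um(2) xM unfolding orbit_of_def by auto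
      have "act m g = act xM (g1 \<otimes>\<^bsub>G\<^esub> g)" using act_mult[OF xM(1) g1(1) g(1)] g1 by simp
      moreover have "g1 \<otimes>\<^bsub>G\<^esub> g \<in> carrier G" using grp g1 g by (simp add: group.is_monoid monoid.m_closed)
      ultimately show ?thesis using xM unfolding orbit_of_def by auto
    qed
    have mgX: "act m g \<in> X" using act_in mX g by auto
    define w' where "w' = w(M := act m g)"
    have img: "w' ` S = insert (act m g) (w ` S')"
      using M(1) unfolding w'_def S'_def by auto
    have below: "\<forall>x\<in>w ` S'. leq x (act m g)"
    proof
      fix x assume x: "x \<in> w ` S'"
      have "leq x c" using c(2) x by blast
      then show "leq x (act m g)" using trans'[of x c "act m g"] cm C(3) x c(1) mgX by (meson subsetD)
    qed
    show ?thesis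
    proof (rule exI[of _ w'], intro conjI)
      show "\<forall>V\<in>S. w' V \<in> V"
      proof
        fix V assume V: "V \<in> S"
        show "w' V \<in> V"
        proof (cases "V = M")
          case True then show ?thesis using mgM unfolding w'_def by simp
        next
          case False then have "V \<in> S'" using V unfolding S'_def by simp
          then show ?thesis using w(1) False unfolding w'_def by simp
        qed
      qed
      have sub: "insert (act m g) (w ` S') \<subseteq> X" using C(3) mgX by simp
      have cmp: "\<forall>x\<in>insert (act m g) (w ` S'). \<forall>y\<in>insert (act m g) (w ` S'). leq x y \<or> leq y x"
      proof (intro ballI)
        fix x y assume x: "x \<in> insert (act m g) (w ` S')" and y: "y \<in> insert (act m g) (w ` S')"
        show "leq x y \<or> leq y x"
        proof (cases "x = act m g")
          case True
          then show ?thesis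
          proof (cases "y = act m g")
            case True then show ?thesis using \<open>x = act m g\<close> refl' mgX by simp
          next
            case False then have "y \<in> w ` S'" using y by simp
            then show ?thesis using below \<open>x = act m g\<close> by blast
          qed
        next
          case False then have xS: "x \<in> w ` S'" using x by simp
          show ?thesis
          proof (cases "y = act m g")
            case True then show ?thesis using below xS by blast
          next
            case False then have "y \<in> w ` S'" using y by simp
            then show ?thesis using C(4) xS by blast
          qed
        qed
      qed
      show "w' ` S \<in> chain_complex X leq"
        unfolding img chain_complex_def using sub cmp by simp
    qed
  qed
qed

end

theorem proposition2p7:
  fixes G :: "('g, 'b) monoid_scheme" and X :: "'a set"
    and leq :: "'a \<Rightarrow> 'a \<Rightarrow> bool" and act :: "'a \<Rightarrow> 'g \<Rightarrow> 'a"
  assumes "finite (carrier G)" and "finite X" and "G_poset G X leq act"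
  shows "orbit_complex G act (chain_complex X leq)
           = chain_complex (orbit_of G act ` X) (orbit_le leq)"
proof
  note GP = assms(3)
  show "orbit_complex G act (chain_complex X leq) \<subseteq> chain_complex (orbit_of G act ` X) (orbit_le leq)"
  proof
    fix S assume "S \<in> orbit_complex G act (chain_complex X leq)"
    then have S: "\<forall>V\<in>S. V \<in> orbit_of G act ` X" and
      "\<exists>w. (\<forall>V\<in>S. w V \<in> V) \<and> w ` S \<in> chain_complex X leq"
      unfolding orbit_complex_def union_chain[OF GP] by auto
    then obtain w where w: "\<forall>V\<in>S. w V \<in> V" "w ` S \<in> chain_complex X leq" by blast
    have "S \<noteq> {}" using w(2) unfolding chain_complex_def by auto
    moreover have "\<forall>U\<in>S. \<forall>V\<in>S. orbit_le leq U V \<or> orbit_le leq V U"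
    proof (intro ballI)
      fix U V assume UV: "U \<in> S" "V \<in> S"
      have "leq (w U) (w V) \<or> leq (w V) (w U)" using w(2) UV unfolding chain_complex_def by auto
      then show "orbit_le leq U V \<or> orbit_le leq V U" unfolding orbit_le_def using w(1) UV by blast
    qed
    ultimately show "S \<in> chain_complex (orbit_of G act ` X) (orbit_le leq)"
      using S unfolding chain_complex_def by auto
  qed
  show "chain_complex (orbit_of G act ` X) (orbit_le leq) \<subseteq> orbit_complex G act (chain_complex X leq)"
  proof
    fix S assume "S \<in> chain_complex (orbit_of G act ` X) (orbit_le leq)"
    then have S: "S \<subseteq> orbit_of G act ` X" "S \<noteq> {}"
      "\<forall>U\<in>S. \<forall>V\<in>S. orbit_le leq U V \<or> orbit_le leq V U"
      unfolding chain_complex_def by auto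
    have "finite S" using S(1) assms(2) finite_subset by blast
    from reps[OF GP this S(2,1,3)] show "S \<in> orbit_complex G act (chain_complex X leq)"
      using S(1) unfolding orbit_complex_def union_chain[OF GP] by auto
  qed
qed

end
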